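(* Let $E$ be a real topological vector space, $\Omega$ a nonempty open subset of $E$, and $f_0,\dots,f_m:\Omega\to\mathbb{R}$. Let $\hat{x}$ be a solution of the problem $(\mathcal{P}_1)$: maximize $f_0(x)$ subject to $x\in\Omega$ and $f_i(x)\ge0$ for all $i\in\{1,\dots,m\}$. Assume that $f_j$ is lower semicontinuous at $\hat{x}$ for every $j\in\{1,\dots,m\}$ with $f_j(\hat{x})>0$, that each $f_i$ ($0\le i\le m$) is $D^-_M$-differentiable at $\hat{x}$, and that, after reindexing, $\{i\in\{1,\dots,m\}:f_i(\hat{x})=0\}=\{1,\dots,l\}$ with $l\ge1$. For $p\in\{0,\dots,l\}$ let $A_p=\{u\in E: D^-_Mf_i(\hat{x})(u)>0\ \text{for all } i\in\{p,\dots,l\}\}$, assume $A_l\ne\emptyset$, and let $k:=\min\{i\in\{0,\dots,l\}:A_i\neq\emptyset\}$ (so that $k\ge1$). Then for every $v\in E$ with $D^-_Mf_i(\hat{x})(v)\ge0$ for all $i\in\{k,\dots,l\}$, one has $D^-_Mf_{k-1}(\hat{x})(v)\le0$.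
   Context: $D^-f(x)(u):=\liminf_{t\to0^+}\frac{f(x+tu)-f(x)}{t}$ (with $D^-f(x)(0)=0$); $D^-_Mf(x)(u):=\inf_{w\in E}\{D^-f(x)(u+w)-D^-f(x)(w)\}$; $f$ is $D^-_M$-differentiable at $x$ if both are finite for every $u\in E$. *)

theory Defs
  imports "HOL-Analysis.Analysis"
begin

class real_tvs = real_vector + topological_ab_group_add +
  assumes continuous_scaleR_tvs:
    "((\<lambda>p. fst p *\<^sub>R snd p) \<longlongrightarrow> c *\<^sub>R x) (nhds c \<times>\<^sub>F nhds x)"

definition lower_dini :: "('a::real_vector \<Rightarrow> real) \<Rightarrow> 'a \<Rightarrow> 'a \<Rightarrow> ereal" where
  "lower_dini f x u =
     (if u = 0 then 0
      else Liminf (at_right 0) (\<lambda>t::real. ereal ((f (x + t *\<^sub>R u) - f x) / t)))"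

definition lower_dini_MP :: "('a::real_vector \<Rightarrow> real) \<Rightarrow> 'a \<Rightarrow> 'a \<Rightarrow> ereal" where
  "lower_dini_MP f x u = (INF w. lower_dini f x (u + w) - lower_dini f x w)"

definition DM_differentiable :: "('a::real_vector \<Rightarrow> real) \<Rightarrow> 'a \<Rightarrow> bool" where
  "DM_differentiable f x \<longleftrightarrow>
     (\<forall>u. \<bar>lower_dini f x u\<bar> \<noteq> \<infinity> \<and> \<bar>lower_dini_MP f x u\<bar> \<noteq> \<infinity>)"

definition lsc_at :: "('a::topological_space \<Rightarrow> real) \<Rightarrow> 'a \<Rightarrow> bool" where
  "lsc_at f x \<longleftrightarrow> (\<forall>c < f x. \<forall>\<^sub>F y in nhds x. c < f y)"

end

theory Submission
  imports Defs
begin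

lemma MP_le_dini:
  "lower_dini_MP f x u \<le> lower_dini f x u"
proof -
  have "lower_dini_MP f x u \<le> lower_dini f x (u + 0) - lower_dini f x 0"
    unfolding lower_dini_MP_def by (rule INF_lower) simp
  also have "\<dots> = lower_dini f x u" by (simp add: lower_dini_def)
  finally show ?thesis .
qed

lemma MP_superadd:
  assumes fin: "\<forall>u. \<bar>lower_dini f x u\<bar> \<noteq> \<infinity>"
  shows "lower_dini_MP f x a + lower_dini_MP f x b \<le> lower_dini_MP f x (a + b)"
proof -
  have "lower_dini_MP f x a + lower_dini_MP f x b \<le> lower_dini f x (a + b + w) - lower_dini f x w" for w
  proof -
    have 1: "lower_dini_MP f x a \<le> lower_dini f x (a + (b + w)) - lower_dini f x (b + w)"
      unfolding lower_dini_MP_def by (rule INF_lower) simp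
    have 2: "lower_dini_MP f x b \<le> lower_dini f x (b + w) - lower_dini f x w"
      unfolding lower_dini_MP_def by (rule INF_lower) simp
    have "lower_dini_MP f x a + lower_dini_MP f x b \<le>
       (lower_dini f x (a + (b + w)) - lower_dini f x (b + w)) + (lower_dini f x (b + w) - lower_dini f x w)"
      using 1 2 by (rule add_mono)
    also have "\<dots> = lower_dini f x (a + b + w) - lower_dini f x w"
    proof -
      obtain p q r where "lower_dini f x (a + (b + w)) = ereal p" "lower_dini f x (b + w) = ereal q"
        "lower_dini f x w = ereal r"
        using fin by (metis ereal_real')
      then show ?thesis by (simp add: add.assoc)
    qed
    finally show ?thesis .
  qed
  then show ?thesis unfolding lower_dini_MP_def[of f x "a+b"] by (rule INF_greatest)
qed

lemma MP_real_superadd: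
  assumes "DM_differentiable f x"
  shows "real_of_ereal (lower_dini_MP f x a) + real_of_ereal (lower_dini_MP f x b)
     \<le> real_of_ereal (lower_dini_MP f x (a + b))"
proof -
  have fin: "\<forall>u. \<bar>lower_dini f x u\<bar> \<noteq> \<infinity>" and fin2: "\<forall>u. \<bar>lower_dini_MP f x u\<bar> \<noteq> \<infinity>"
    using assms unfolding DM_differentiable_def by auto
  have "lower_dini_MP f x a + lower_dini_MP f x b \<le> lower_dini_MP f x (a + b)"
    using MP_superadd[OF fin] .
  then show ?thesis using fin2
    by (metis ereal_less_eq(3) ereal_real' plus_ereal.simps(1))
qed

lemma MP_real_mult:
  assumes "DM_differentiable f x"
  shows "real (Suc n) * real_of_ereal (lower_dini_MP f x v)
     \<le> real_of_ereal (lower_dini_MP f x (real (Suc n) *\<^sub>R v))"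
proof (induction n)
  case 0
  then show ?case by simp
next
  case (Suc n)
  have "real (Suc (Suc n)) *\<^sub>R v = real (Suc n) *\<^sub>R v + v"
    by (simp only: of_nat_Suc[of "Suc n"] scaleR_add_left scaleR_one add.commute)
  then have "real_of_ereal (lower_dini_MP f x (real (Suc n) *\<^sub>R v)) + real_of_ereal (lower_dini_MP f x v)
     \<le> real_of_ereal (lower_dini_MP f x (real (Suc (Suc n)) *\<^sub>R v))"
    using MP_real_superadd[OF assms] by metis
  then show ?case using Suc by (simp add: algebra_simps)
qed

lemma tendsto_line:
  fixes xh u :: "'a::real_tvs"
  shows "((\<lambda>t::real. xh + t *\<^sub>R u) \<longlongrightarrow> xh) (at_right 0)"
proof -
  have "((\<lambda>t::real. (t, u)) \<longlongrightarrow> (0, u)) (at_right 0)"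
    by (intro tendsto_Pair tendsto_ident_at tendsto_const)
  then have p: "filterlim (\<lambda>t::real. (t, u)) (nhds 0 \<times>\<^sub>F nhds u) (at_right 0)"
    by (simp add: nhds_prod)
  have "((\<lambda>t::real. t *\<^sub>R u) \<longlongrightarrow> 0 *\<^sub>R u) (at_right 0)"
    using filterlim_compose[OF continuous_scaleR_tvs[of 0 u] p] by simp
  then have "((\<lambda>t::real. xh + t *\<^sub>R u) \<longlongrightarrow> xh + 0) (at_right 0)"
    by (intro tendsto_add tendsto_const) simp
  then show ?thesis by simp
qed

theorem lemma3p8:
  fixes f :: "nat \<Rightarrow> 'a::real_tvs \<Rightarrow> real"
    and \<Omega> :: "'a set" and xh :: 'a and m l :: nat
  assumes "open \<Omega>" and "\<Omega> \<noteq> {}"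
    and feas: "xh \<in> \<Omega>" "\<forall>i\<in>{1..m}. f i xh \<ge> 0"
    and opt: "\<forall>x\<in>\<Omega>. (\<forall>i\<in>{1..m}. f i x \<ge> 0) \<longrightarrow> f 0 x \<le> f 0 xh"
    and lsc: "\<forall>j\<in>{1..m}. f j xh > 0 \<longrightarrow> lsc_at (f j) xh"
    and diff: "\<forall>i\<in>{0..m}. DM_differentiable (f i) xh"
    and active: "{i\<in>{1..m}. f i xh = 0} = {1..l}" and "l \<ge> 1"
    and A_def: "\<forall>p. A p = {u. \<forall>i\<in>{p..l}. lower_dini_MP (f i) xh u > 0}"
    and "A l \<noteq> {}"
    and k_def: "k = (LEAST i. i \<le> l \<and> A i \<noteq> {})"
  shows "k \<ge> 1 \<and>
    (\<forall>v. (\<forall>i\<in>{k..l}. lower_dini_MP (f i) xh v \<ge> 0) \<longrightarrow> lower_dini_MP (f (k - 1)) xh v \<le> 0)"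
proof -
  have "l \<in> {i\<in>{1..m}. f i xh = 0}" unfolding active using \<open>l \<ge> 1\<close> by simp
  then have lm: "l \<le> m" by simp
  have act0: "f i xh = 0" if "i \<in> {1..l}" for i using active that by blast
  have kl: "k \<le> l \<and> A k \<noteq> {}"
    unfolding k_def by (rule LeastI[of _ l]) (use \<open>A l \<noteq> {}\<close> in simp)
  have A0: "A 0 = {}"
  proof (rule ccontr)
    assume "A 0 \<noteq> {}"
    then obtain u where u: "\<forall>i\<in>{0..l}. lower_dini_MP (f i) xh u > 0" using A_def by auto
    have ev1: "\<forall>\<^sub>F t in at_right 0. f i xh < f i (xh + t *\<^sub>R u)" if i: "i \<in> {0..l}" for i
    proof -
      have pos: "0 < lower_dini (f i) xh u" using u i MP_le_dini less_le_trans by blast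
      then have "u \<noteq> 0" by (auto simp: lower_dini_def)
      with pos have "0 < Liminf (at_right 0) (\<lambda>t::real. ereal ((f i (xh + t *\<^sub>R u) - f i xh) / t))"
        by (simp add: lower_dini_def)
      from less_LiminfD[OF this]
      have "\<forall>\<^sub>F t in at_right 0. 0 < (f i (xh + t *\<^sub>R u) - f i xh) / t" by simp
      moreover have "\<forall>\<^sub>F t in at_right (0::real). 0 < t" by (simp add: eventually_at_right_less)
      ultimately show ?thesis
        by eventually_elim (simp add: zero_less_divide_iff)
    qed
    have ev2: "\<forall>\<^sub>F t in at_right 0. 0 < f j (xh + t *\<^sub>R u)" if j: "j \<in> {l+1..m}" for j
    proof -
      have "j \<in> {1..m}" using j \<open>l \<ge> 1\<close> by simp
      have "f j xh \<noteq> 0"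
      proof
        assume "f j xh = 0"
        then have "j \<in> {i\<in>{1..m}. f i xh = 0}" using \<open>j \<in> {1..m}\<close> by simp
        then have "j \<in> {1..l}" unfolding active .
        then show False using j by simp
      qed
      then have "f j xh > 0" using feas(2) \<open>j \<in> {1..m}\<close> by force
      with lsc \<open>j \<in> {1..m}\<close> have "lsc_at (f j) xh" by blast
      then have "\<forall>\<^sub>F y in nhds xh. 0 < f j y" using \<open>f j xh > 0\<close> unfolding lsc_at_def by blast
      then show ?thesis by (rule eventually_compose_filterlim[where P="\<lambda>y. 0 < f j y", OF _ tendsto_line[of xh u]])
    qed
    have ev3: "\<forall>\<^sub>F t in at_right 0. xh + t *\<^sub>R u \<in> \<Omega>"
      using topological_tendstoD[OF tendsto_line[of xh u] \<open>open \<Omega>\<close> feas(1)] .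
    have "\<forall>\<^sub>F t in at_right 0. \<forall>i\<in>{0..l}. f i xh < f i (xh + t *\<^sub>R u)"
      using ev1 by (subst eventually_ball_finite_distrib) auto
    moreover have "\<forall>\<^sub>F t in at_right 0. \<forall>j\<in>{l+1..m}. 0 < f j (xh + t *\<^sub>R u)"
      using ev2 by (subst eventually_ball_finite_distrib) auto
    ultimately have "\<forall>\<^sub>F t in at_right (0::real). xh + t *\<^sub>R u \<in> \<Omega> \<and>
        (\<forall>i\<in>{0..l}. f i xh < f i (xh + t *\<^sub>R u)) \<and> (\<forall>j\<in>{l+1..m}. 0 < f j (xh + t *\<^sub>R u))"
      using ev3 by eventually_elim auto
    then obtain t where t: "xh + t *\<^sub>R u \<in> \<Omega>" "\<forall>i\<in>{0..l}. f i xh < f i (xh + t *\<^sub>R u)"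
      "\<forall>j\<in>{l+1..m}. 0 < f j (xh + t *\<^sub>R u)"
      using eventually_happens'[OF trivial_limit_at_right_real] by blast
    have "\<forall>i\<in>{1..m}. f i (xh + t *\<^sub>R u) \<ge> 0"
    proof
      fix i assume i: "i \<in> {1..m}"
      show "f i (xh + t *\<^sub>R u) \<ge> 0"
      proof (cases "i \<le> l")
        case True
        then have "f i xh = 0" using act0 i by auto
        have "f i xh < f i (xh + t *\<^sub>R u)" using t(2) True by auto
        then show ?thesis using \<open>f i xh = 0\<close> by simp
      next
        case False
        then have "i \<in> {l+1..m}" using i by simp
        then show ?thesis using t(3) by (meson less_imp_le)
      qed
    qed
    then have "f 0 (xh + t *\<^sub>R u) \<le> f 0 xh" using opt t(1) by blast
    moreover have "f 0 xh < f 0 (xh + t *\<^sub>R u)" using t(2) by auto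
    ultimately show False by simp
  qed
  have k1: "k \<ge> 1"
  proof (rule ccontr)
    assume "\<not> k \<ge> 1"
    then have "k = 0" by simp
    then show False using kl A0 by simp
  qed
  moreover have "lower_dini_MP (f (k - 1)) xh v \<le> 0"
    if v: "\<forall>i\<in>{k..l}. lower_dini_MP (f i) xh v \<ge> 0" for v
  proof (rule ccontr)
    assume "\<not> lower_dini_MP (f (k - 1)) xh v \<le> 0"
    then have vpos: "lower_dini_MP (f (k - 1)) xh v > 0" by simp
    obtain u where u: "u \<in> A k" using kl by blast
    then have u': "\<forall>i\<in>{k..l}. lower_dini_MP (f i) xh u > 0" using A_def by auto
    define M where "M i w = real_of_ereal (lower_dini_MP (f i) xh w)" for i w
    have Dif: "DM_differentiable (f i) xh" if "i \<le> l" for i using diff that lm by auto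
    have fin: "ereal (M i w) = lower_dini_MP (f i) xh w" if "i \<le> l" for i w
      using Dif[OF that] unfolding M_def DM_differentiable_def by (simp add: ereal_real')
    have key: "M i (real (Suc n) *\<^sub>R v) + M i u \<le> M i (real (Suc n) *\<^sub>R v + u)"
      "real (Suc n) * M i v \<le> M i (real (Suc n) *\<^sub>R v)" if "i \<le> l" for i n
      using MP_real_superadd[OF Dif[OF that]] MP_real_mult[OF Dif[OF that]] unfolding M_def by auto
    have kl1: "k - 1 \<le> l" using kl by linarith
    have "0 < ereal (M (k-1) v)" using fin[OF kl1, of v] vpos by simp
    then have Mv: "M (k-1) v > 0" by simp
    obtain n where n0: "- M (k-1) u < real n * M (k-1) v"
      using ex_less_of_nat_mult[OF Mv] by blast
    have "real n * M (k-1) v \<le> real (Suc n) * M (k-1) v" using Mv by (intro mult_right_mono) auto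
    with n0 have n: "- M (k-1) u < real (Suc n) * M (k-1) v" by linarith
    have "real (Suc n) *\<^sub>R v + u \<in> A (k - 1)"
      unfolding A_def[rule_format] 
    proof (intro CollectI ballI)
      fix i assume i: "i \<in> {k - 1..l}"
      then have il: "i \<le> l" by simp
      have "0 < M i (real (Suc n) *\<^sub>R v + u)"
      proof (cases "i = k - 1")
        case True
        then show ?thesis using key[OF il, of n] n by simp
      next
        case False
        then have "i \<in> {k..l}" using i by auto
        then have "0 \<le> ereal (M i v)" "0 < ereal (M i u)" using v u' fin[OF il] by auto
        then have "M i v \<ge> 0" "M i u > 0" by simp_all
        then have "real (Suc n) * M i v \<ge> 0" by simp
        then show ?thesis using key[OF il, of n] \<open>M i u > 0\<close> by linarith
      qed
      then have "0 < ereal (M i (real (Suc n) *\<^sub>R v + u))" by simp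
      then show "0 < lower_dini_MP (f i) xh (real (Suc n) *\<^sub>R v + u)"
        unfolding fin[OF il, of "real (Suc n) *\<^sub>R v + u"] .
    qed
    then have "A (k-1) \<noteq> {}" by blast
    moreover have "k - 1 < k" using k1 by simp
    ultimately show False using not_less_Least[of "k-1" "\<lambda>i. i \<le> l \<and> A i \<noteq> {}"] kl1 k_def by blast
  qed
  ultimately show ?thesis by blast
qed

end
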